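(* Let $a_2>0$ and consider the two-link parallel network with unit demand and latencies $\ell_1(x_1)=x_1$, $\ell_2(x_2)=a_2x_2$. Then every $t\in\mathcal{T}(\infty)$ equals $t=\left(\frac{2a_2+1}{3},\frac{a_2+2}{3}\right)$, and for this $t$, $$\frac{C(x(t))}{C(x^* )}=\frac{a_2^2+7a_2+1}{9a_2},$$ where $x^*$ is the optimal flow. In particular this ratio tends to $\infty$ as $a_2\to\infty$.
   Context: Flows $x\in\mathbb{R}^2_+$ with $x_1+x_2=1$; $C(x)=\sum_i\ell_i(x_i)x_i$; $x^*$ minimizes $C$. For tolls $t\in\mathbb{R}^2_+$, $x(t)$ is the unique Wardrop equilibrium for $t$ (for all $i,j$ with $x_i>0$: $\ell_i(x_i)+t_i\le\ell_j(x_j)+t_j$). Profit $\Pi_i(t)=t_ix_i(t)$. $\mathcal{T}(\infty)$: the set of toll vectors $t\in\mathbb{R}^2_+$ such that for every $i$ and every $t'_i\ge0$, $\Pi_i(t_i,t_{-i})\ge\Pi_i(t'_i,t_{-i})$ (flow recomputed). *)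

theory Defs
  imports "HOL-Analysis.Analysis"
begin

definition lat :: "real \<Rightarrow> 2 \<Rightarrow> real \<Rightarrow> real" where
  "lat a2 i y = (if i = 1 then y else a2 * y)"

definition feasible :: "real^2 \<Rightarrow> bool" where
  "feasible x \<longleftrightarrow> (\<forall>i. x$i \<ge> 0) \<and> x$1 + x$2 = 1"

definition total_cost :: "real \<Rightarrow> real^2 \<Rightarrow> real" where
  "total_cost a2 x = (\<Sum>i\<in>UNIV. lat a2 i (x$i) * x$i)"

definition is_opt :: "real \<Rightarrow> real^2 \<Rightarrow> bool" where
  "is_opt a2 x \<longleftrightarrow> feasible x \<and> (\<forall>y. feasible y \<longrightarrow> total_cost a2 x \<le> total_cost a2 y)"

definition opt_flow :: "real \<Rightarrow> real^2" where
  "opt_flow a2 = (THE x. is_opt a2 x)"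

definition wardrop :: "real \<Rightarrow> real^2 \<Rightarrow> real^2 \<Rightarrow> bool" where
  "wardrop a2 t x \<longleftrightarrow> feasible x \<and>
     (\<forall>i j. x$i > 0 \<longrightarrow> lat a2 i (x$i) + t$i \<le> lat a2 j (x$j) + t$j)"

definition eq_flow :: "real \<Rightarrow> real^2 \<Rightarrow> real^2" where
  "eq_flow a2 t = (THE x. wardrop a2 t x)"

definition profit :: "real \<Rightarrow> 2 \<Rightarrow> real^2 \<Rightarrow> real" where
  "profit a2 i t = t$i * (eq_flow a2 t)$i"

definition vupd :: "real^2 \<Rightarrow> 2 \<Rightarrow> real \<Rightarrow> real^2" where
  "vupd t i v = (\<chi> j. if j = i then v else t$j)"

text \<open>T(infinity): toll vectors that are Nash equilibria of the pricing game.\<close>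
definition toll_NE :: "real \<Rightarrow> (real^2) set" where
  "toll_NE a2 = {t. (\<forall>i. t$i \<ge> 0) \<and>
     (\<forall>i t'. t' \<ge> 0 \<longrightarrow> profit a2 i t \<ge> profit a2 i (vupd t i t'))}"

end

theory Submission
  imports Defs
begin

definition cl :: "real \<Rightarrow> real^2 \<Rightarrow> real" where
  "cl a t = max 0 (min 1 ((a + t$2 - t$1)/(1+a)))"

lemma one_ne_two: "(1::2) \<noteq> 2" by simp

lemma wardrop_char:
  assumes a: "a > 0" and w: "wardrop a t x"
  shows "x = (\<chi> i. if i = 1 then cl a t else 1 - cl a t)"
proof -
  have f: "x$1 \<ge> 0" "x$2 \<ge> 0" "x$1 + x$2 = 1" using w unfolding wardrop_def feasible_def by auto
  have w1': "x$1 > 0 \<longrightarrow> lat a 1 (x$1) + t$1 \<le> lat a 2 (x$2) + t$2"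
    using w unfolding wardrop_def by blast
  have w2': "x$2 > 0 \<longrightarrow> lat a 2 (x$2) + t$2 \<le> lat a 1 (x$1) + t$1"
    using w unfolding wardrop_def by blast
  have w1: "x$1 > 0 \<Longrightarrow> x$1 + t$1 \<le> a * x$2 + t$2"
    using w1' unfolding lat_def by simp
  have w2: "x$2 > 0 \<Longrightarrow> a * x$2 + t$2 \<le> x$1 + t$1"
    using w2' unfolding lat_def by simp
  have "x$1 = cl a t"
  proof (cases "x$1 = 0")
    case True
    then have "x$2 = 1" using f by simp
    with w2 have "a + t$2 \<le> t$1" using True by simp
    then have "(a + t$2 - t$1)/(1+a) \<le> 0" using a by (simp add: divide_nonpos_pos)
    then show ?thesis unfolding cl_def using True by simp
  next
    case False
    note x1 = this
    show ?thesis
    proof (cases "x$2 = 0")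
      case True
      then have "x$1 = 1" using f by simp
      with w1 True have "1 + t$1 \<le> t$2" by simp
      then have "(a + t$2 - t$1)/(1+a) \<ge> 1" using a by (simp add: field_simps)
      then show ?thesis unfolding cl_def using \<open>x$1 = 1\<close> by simp
    next
      case False
      have "x$1 + t$1 = a * x$2 + t$2" using w1 w2 False x1 f by force
      moreover have "x$2 = 1 - x$1" using f by simp
      then have "a*x$2 = a - a*x$1" by (simp add: right_diff_distrib)
      moreover have "x$1*(1+a) = x$1 + a*x$1" by (simp add: algebra_simps)
      ultimately have "x$1*(1+a) = a + t$2 - t$1" by linarith
      then have q: "x$1 = (a + t$2 - t$1)/(1+a)" using a by (simp add: eq_divide_eq)
      have "x$1 < 1" using f False by simp
      then show ?thesis unfolding cl_def using q f x1 by simp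
    qed
  qed
  then show ?thesis using f by (simp add: vec_eq_iff forall_2)
qed

lemma wardrop_intro:
  assumes "x$1 \<ge> 0" "x$2 \<ge> 0" "x$1 + x$2 = 1"
    "x$1 > 0 \<Longrightarrow> x$1 + t$1 \<le> a * x$2 + t$2"
    "x$2 > 0 \<Longrightarrow> a * x$2 + t$2 \<le> x$1 + t$1"
  shows "wardrop a t x"
  unfolding wardrop_def feasible_def lat_def forall_2 using assms by auto

lemma wardrop_exists:
  assumes a: "a > 0"
  shows "wardrop a t (\<chi> i. if i = 1 then cl a t else 1 - cl a t)"
proof -
  define q where "q = (a + t$2 - t$1)/(1+a)"
  have qe: "q * (1+a) = a + t$2 - t$1" using a unfolding q_def by (simp add: field_simps)
  have c: "cl a t = max 0 (min 1 q)" unfolding cl_def q_def by simp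
  define x :: "real^2" where "x = (\<chi> i. if i = 1 then cl a t else 1 - cl a t)"
  have x1: "x$1 = max 0 (min 1 q)" and x2: "x$2 = 1 - max 0 (min 1 q)"
    unfolding x_def c by simp_all
  have "wardrop a t x"
  proof (rule wardrop_intro)
    show "x$1 > 0 \<Longrightarrow> x$1 + t$1 \<le> a * x$2 + t$2"
    proof -
      assume h: "x$1 > 0"
      then have "q > 0" using x1 by simp
      show ?thesis
      proof (cases "q \<ge> 1")
        case True
        have "1+a \<le> q*(1+a)" using True a mult_right_mono[of 1 q "1+a"] by simp
        then have "1 + t$1 \<le> t$2" using qe by linarith
        then show ?thesis using x1 x2 True by simp
      next
        case False
        then have "x$1 = q" "x$2 = 1 - q" using x1 x2 \<open>q > 0\<close> by auto
        moreover have "q * (1+a) = q + a * q" by (simp add: algebra_simps)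
        ultimately have "a * x$2 = a - a*q" by (simp add: right_diff_distrib)
        then show ?thesis using qe \<open>x$1 = q\<close> \<open>q * (1+a) = q + a * q\<close> by linarith
      qed
    qed
    show "x$2 > 0 \<Longrightarrow> a * x$2 + t$2 \<le> x$1 + t$1"
    proof -
      assume h: "x$2 > 0"
      have "q < 1"
      proof (rule ccontr)
        assume "\<not> q < 1"
        then have "max 0 (min 1 q) = 1" by simp
        then show False using h x2 by simp
      qed
      show ?thesis
      proof (cases "q \<le> 0")
        case True
        have "q*(1+a) \<le> 0" using True a by (intro mult_nonpos_nonneg) auto
        then have "a + t$2 \<le> t$1" using qe by linarith
        then show ?thesis using x1 x2 True by simp
      next
        case False
        then have "x$1 = q" "x$2 = 1 - q" using x1 x2 \<open>q < 1\<close> by auto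
        moreover have "q * (1+a) = q + a * q" by (simp add: algebra_simps)
        ultimately have "a * x$2 = a - a*q" by (simp add: right_diff_distrib)
        then show ?thesis using qe \<open>x$1 = q\<close> \<open>q * (1+a) = q + a * q\<close> by linarith
      qed
    qed
  qed (auto simp: x1 x2)
  then show ?thesis unfolding x_def .
qed

lemma eq_flow_eq:
  assumes "a > 0"
  shows "eq_flow a t = (\<chi> i. if i = 1 then cl a t else 1 - cl a t)"
  unfolding eq_flow_def
  using wardrop_exists[OF assms] wardrop_char[OF assms] by (rule the_equality)

lemma profit1: "a > 0 \<Longrightarrow> profit a 1 t = t$1 * cl a t"
  by (simp add: profit_def eq_flow_eq)

lemma profit2: "a > 0 \<Longrightarrow> profit a 2 t = t$2 * (1 - cl a t)"
  by (simp add: profit_def eq_flow_eq)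

lemma tc: "total_cost a x = x$1 * x$1 + a * x$2 * x$2"
  unfolding total_cost_def sum_2 lat_def by simp

lemma opt_flow_eq:
  assumes a: "a > 0"
  shows "opt_flow a = (\<chi> i. if i = 1 then a/(1+a) else 1/(1+a))"
proof -
  define xs :: "real^2" where "xs = (\<chi> i. if i = 1 then a/(1+a) else 1/(1+a))"
  have xs1: "xs$1 = a/(1+a)" and xs2: "xs$2 = 1/(1+a)" unfolding xs_def by simp_all
  have key: "total_cost a y = a/(1+a) + (1+a) * (y$1 - a/(1+a))^2" if "feasible y" for y
  proof -
    have h: "y$2 = 1 - y$1" using that unfolding feasible_def by simp
    show ?thesis unfolding tc h using a by (simp add: divide_simps power2_eq_square) algebra
  qed
  have fxs: "feasible xs" unfolding feasible_def forall_2 xs1 xs2 using a by (simp add: field_simps)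
  have cxs: "total_cost a xs = a/(1+a)" using key[OF fxs] xs1 by simp
  have opt: "is_opt a xs" unfolding is_opt_def using fxs cxs key a by auto
  have uniq: "x = xs" if "is_opt a x" for x
  proof -
    have fx: "feasible x" and le: "total_cost a x \<le> total_cost a xs"
      using that fxs unfolding is_opt_def by auto
    then have "(1+a) * (x$1 - a/(1+a))^2 \<le> 0" using key[OF fx] cxs by simp
    then have "(x$1 - a/(1+a))^2 \<le> 0" using a by (simp add: mult_le_0_iff)
    then have "x$1 = a/(1+a)" by simp
    moreover have "x$2 = 1 - x$1" using fx unfolding feasible_def by simp
    ultimately have "x$2 = 1 - a/(1+a)" by simp
    also have "\<dots> = 1/(1+a)" using a by (simp add: field_simps)
    finally have "x$2 = 1/(1+a)" .
    with \<open>x$1 = a/(1+a)\<close> show ?thesis by (simp add: vec_eq_iff forall_2 xs1 xs2)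
  qed
  show ?thesis unfolding opt_flow_def xs_def[symmetric] using opt uniq by (rule the_equality)
qed

lemma ratio:
  assumes a: "a > 0"
  shows "total_cost a (eq_flow a (\<chi> i. if i = 1 then (2*a + 1)/3 else (a + 2)/3))
        / total_cost a (opt_flow a) = (a^2 + 7*a + 1) / (9*a)"
proof -
  define t :: "real^2" where "t = (\<chi> i. if i = 1 then (2*a + 1)/3 else (a + 2)/3)"
  have q: "(a + t$2 - t$1)/(1+a) = (2*a+1)/(3*(1+a))" unfolding t_def using a by (simp add: field_simps)
  have "(2*a+1)/(3*(1+a)) < 1" "(2*a+1)/(3*(1+a)) > 0" using a by (simp_all add: field_simps)
  then have c: "cl a t = (2*a+1)/(3*(1+a))" unfolding cl_def q by simp
  have e: "total_cost a (eq_flow a t) = (a+1)*(a^2+7*a+1) / (9*(1+a)^2)"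
    unfolding eq_flow_eq[OF a] tc c using a by (simp add: divide_simps power2_eq_square) algebra
  have o: "total_cost a (opt_flow a) = a/(1+a)"
    unfolding opt_flow_eq[OF a] tc using a by (simp add: divide_simps power2_eq_square) algebra
  have a1: "1 + a \<noteq> 0" "a \<noteq> 0" using a by auto
  show ?thesis unfolding t_def[symmetric] e o using a1 by (simp add: divide_simps power2_eq_square) algebra
qed

lemma NE_unique:
  assumes a: "a > 0" and t: "t \<in> toll_NE a"
  shows "t = (\<chi> i. if i = 1 then (2*a+1)/3 else (a+2)/3)"
proof -
  define p where "p = t$1"
  define r where "r = t$2"
  have a1: "1 + a > 0" using a by simp
  have nn: "p \<ge> 0" "r \<ge> 0" using t unfolding toll_NE_def p_def r_def by auto
  have br: "profit a i (vupd t i y) \<le> profit a i t" if "y \<ge> 0" for i y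
    using t that unfolding toll_NE_def by auto
  define Q where "Q y = (a + r - y)/(1+a)" for y
  define Q2 where "Q2 z = (a + z - p)/(1+a)" for z
  have P1: "profit a 1 (vupd t 1 y) = y * max 0 (min 1 (Q y))" for y
    by (simp add: profit1[OF a] cl_def vupd_def Q_def r_def)
  have P2: "profit a 2 (vupd t 2 z) = z * (1 - max 0 (min 1 (Q2 z)))" for z
    by (simp add: profit2[OF a] cl_def vupd_def Q2_def p_def)
  have P1t: "profit a 1 t = p * max 0 (min 1 (Q p))"
    by (simp add: profit1[OF a] cl_def Q_def p_def r_def)
  have P2t: "profit a 2 t = r * (1 - max 0 (min 1 (Q p)))"
    by (simp add: profit2[OF a] cl_def Q_def p_def r_def)
  define y0 where "y0 = (a+r)/2"
  have y0: "y0 > 0" "Q y0 > 0" using a nn a1 unfolding y0_def Q_def by (simp_all add: field_simps)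
  have "profit a 1 (vupd t 1 y0) > 0" unfolding P1 using y0 by simp
  then have pos1: "p * max 0 (min 1 (Q p)) > 0" using br[of y0 1] y0 P1t by linarith
  then have pp: "p > 0" and Qp0: "Q p > 0" using nn
    by (auto simp: zero_less_mult_iff max_def min_def split: if_splits)
  define z0 where "z0 = (1+p)/2"
  have z0: "z0 > 0" "Q2 z0 < 1" using a nn a1 unfolding z0_def Q2_def by (simp_all add: field_simps)
  have "profit a 2 (vupd t 2 z0) > 0" unfolding P2 using z0 by (simp add: max_def min_def)
  then have pos2: "r * (1 - max 0 (min 1 (Q p))) > 0" using br[of z0 2] z0 P2t by linarith
  then have rp: "r > 0" and Qp1: "Q p < 1" using nn
    by (auto simp: zero_less_mult_iff max_def min_def split: if_splits)
  have i1: "a + r - p > 0" using Qp0 a1 unfolding Q_def by (simp add: zero_less_divide_iff)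
  have i2: "a + r - p < 1 + a" using Qp1 a1 unfolding Q_def by (simp add: divide_less_eq)
  have Qpv: "max 0 (min 1 (Q p)) = Q p" using Qp0 Qp1 by simp
  \<comment> \<open>Fermat for player 1\<close>
  define g where "g y = (y*(a+r) - y*y)/(1+a)" for y
  have gQ: "g y = y * Q y" for y unfolding g_def Q_def by (simp add: field_simps)
  have dg: "DERIV g p :> ((a+r) - 2*p)/(1+a)"
    unfolding g_def using a1 by (auto intro!: derivative_eq_intros simp: divide_simps)
  define d1 where "d1 = min p (min (1 + a - (a + r - p)) (a + r - p))"
  have d1: "d1 > 0" unfolding d1_def using pp i1 i2 by simp
  have "\<forall>y. \<bar>p - y\<bar> < d1 \<longrightarrow> g y \<le> g p"
  proof (intro allI impI)
    fix y assume y: "\<bar>p - y\<bar> < d1"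
    have "y > 0" "a + r - y > 0" "a + r - y < 1 + a" using y unfolding d1_def by auto
    then have "Q y > 0" "Q y < 1" using a1 unfolding Q_def by (simp_all add: zero_less_divide_iff divide_less_eq)
    then have "g y = profit a 1 (vupd t 1 y)" unfolding P1 gQ by simp
    also have "\<dots> \<le> profit a 1 t" using br[of y 1] \<open>y > 0\<close> by simp
    also have "\<dots> = g p" unfolding P1t gQ Qpv ..
    finally show "g y \<le> g p" .
  qed
  from DERIV_local_max[OF dg d1 this] have e1: "a + r = 2*p" using a1 by simp
  \<comment> \<open>Fermat for player 2\<close>
  define h where "h z = (z*(1+p) - z*z)/(1+a)" for z
  have hQ: "h z = z * (1 - Q2 z)" for z unfolding h_def Q2_def using a1 by (simp add: field_simps)
  have Q2r: "Q2 r = Q p" unfolding Q2_def Q_def by simp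
  have dh: "DERIV h r :> ((1+p) - 2*r)/(1+a)"
    unfolding h_def using a1 by (auto intro!: derivative_eq_intros simp: divide_simps)
  define d2 where "d2 = min r (min (1 + p - r) (a + r - p))"
  have d2: "d2 > 0" unfolding d2_def using rp i1 i2 by simp
  have "\<forall>z. \<bar>r - z\<bar> < d2 \<longrightarrow> h z \<le> h r"
  proof (intro allI impI)
    fix z assume z: "\<bar>r - z\<bar> < d2"
    have "z > 0" "a + z - p > 0" "a + z - p < 1 + a" using z unfolding d2_def by auto
    then have "Q2 z > 0" "Q2 z < 1" using a1 unfolding Q2_def by (simp_all add: zero_less_divide_iff divide_less_eq)
    then have "h z = profit a 2 (vupd t 2 z)" unfolding P2 hQ by simp
    also have "\<dots> \<le> profit a 2 t" using br[of z 2] \<open>z > 0\<close> by simp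
    also have "\<dots> = h r" unfolding P2t hQ Qpv Q2r ..
    finally show "h z \<le> h r" .
  qed
  from DERIV_local_max[OF dh d2 this] have e2: "1 + p = 2*r" using a1 by simp
  have "p = (2*a+1)/3" using e1 e2 by (simp add: field_simps)
  moreover have "r = (a+2)/3" using e1 e2 by (simp add: field_simps)
  ultimately
  show ?thesis unfolding p_def r_def by (simp add: vec_eq_iff forall_2)
qed

theorem mainTheorem12:
  fixes a2 :: real
  assumes "a2 > 0"
  shows "(\<forall>t \<in> toll_NE a2. t = (\<chi> i. if i = 1 then (2*a2 + 1)/3 else (a2 + 2)/3))
    \<and> total_cost a2 (eq_flow a2 (\<chi> i. if i = 1 then (2*a2 + 1)/3 else (a2 + 2)/3))
        / total_cost a2 (opt_flow a2) = (a2^2 + 7*a2 + 1) / (9*a2)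
    \<and> filterlim (\<lambda>b. total_cost b (eq_flow b (\<chi> i. if i = 1 then (2*b + 1)/3 else (b + 2)/3))
        / total_cost b (opt_flow b)) at_top at_top"
proof (intro conjI)
  show "\<forall>t \<in> toll_NE a2. t = (\<chi> i. if i = 1 then (2*a2 + 1)/3 else (a2 + 2)/3)"
    using NE_unique[OF assms] by blast
  show "total_cost a2 (eq_flow a2 (\<chi> i. if i = 1 then (2*a2 + 1)/3 else (a2 + 2)/3))
        / total_cost a2 (opt_flow a2) = (a2^2 + 7*a2 + 1) / (9*a2)"
    by (rule ratio[OF assms])
  have ev: "eventually (\<lambda>b. (b^2 + 7*b + 1) / (9*b) = total_cost b (eq_flow b (\<chi> i. if i = 1 then (2*b + 1)/3 else (b + 2)/3))
        / total_cost b (opt_flow b)) at_top"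
    using eventually_gt_at_top[of "0::real"] by eventually_elim (simp add: ratio)
  have lin: "filterlim (\<lambda>b::real. 1/9 * b) at_top at_top"
    by (rule filterlim_tendsto_pos_mult_at_top[OF tendsto_const _ filterlim_ident]) simp
  have "filterlim (\<lambda>b::real. (b^2 + 7*b + 1) / (9*b)) at_top at_top"
  proof (rule filterlim_at_top_mono[OF lin])
    show "eventually (\<lambda>b::real. 1/9 * b \<le> (b^2 + 7*b + 1) / (9*b)) at_top"
      using eventually_gt_at_top[of "0::real"]
      by eventually_elim (simp add: divide_simps power2_eq_square)
  qed
  then show "filterlim (\<lambda>b. total_cost b (eq_flow b (\<chi> i. if i = 1 then (2*b + 1)/3 else (b + 2)/3))
        / total_cost b (opt_flow b)) at_top at_top"
    using filterlim_cong[OF refl refl ev] by simp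
qed

end
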